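(* Let $N$ and $T$ be integers with $0\le T \le N$, and let $F(T) = T + \lfloor T^2/4\rfloor + 1$. Let $\mathcal{G}=(\mathcal{V},\mathcal{E})$ be a finite undirected graph (self-loops allowed) with $N-T \le |\mathcal{V}| \le N$ in which every vertex has a self-loop. Let $V'$ be the set of vertices contained in a clique of size at least $N-T$, and suppose $V'\ne\emptyset$. Let $$V^* = \{v\in V' : (v,\tilde v)\in\mathcal{E}\ \text{for all } \tilde v \in V'\}.$$ Then $|V^*| \ge N - F(T)$.
   Context: A clique is a set of distinct vertices that are pairwise joined by edges. *)

theory Defs
  imports Main
begin

definition undirected_graph :: "'a set \<Rightarrow> ('a \<Rightarrow> 'a \<Rightarrow> bool) \<Rightarrow> bool" where
  "undirected_graph V E \<longleftrightarrow> finite V \<and> (\<forall>u v. E u v \<longrightarrow> u \<in> V \<and> v \<in> V)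
     \<and> (\<forall>u v. E u v \<longrightarrow> E v u)"

definition is_clique :: "'a set \<Rightarrow> ('a \<Rightarrow> 'a \<Rightarrow> bool) \<Rightarrow> 'a set \<Rightarrow> bool" where
  "is_clique V E C \<longleftrightarrow> C \<subseteq> V \<and> (\<forall>u\<in>C. \<forall>v\<in>C. u \<noteq> v \<longrightarrow> E u v)"

definition F_bound :: "int \<Rightarrow> int" where
  "F_bound T = T + (T^2) div 4 + 1"

definition clique_vertices :: "'a set \<Rightarrow> ('a \<Rightarrow> 'a \<Rightarrow> bool) \<Rightarrow> int \<Rightarrow> 'a set" where
  "clique_vertices V E k = {v \<in> V. \<exists>C. is_clique V E C \<and> v \<in> C \<and> int (card C) \<ge> k}"

end

theory Submission
  imports Defs
begin

lemma core:
  fixes P C0 :: "'a set" and k :: nat and E :: "'a \<Rightarrow> 'a \<Rightarrow> bool"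
  assumes fin: "finite P" and C0P: "C0 \<subseteq> P"
   and maxc: "\<And>C. C \<subseteq> P \<Longrightarrow> (\<forall>u\<in>C. \<forall>v\<in>C. u\<noteq>v \<longrightarrow> E u v) \<Longrightarrow> card C \<le> card C0"
   and cov: "\<And>u. u \<in> P - C0 \<Longrightarrow> \<exists>D. D \<subseteq> P \<and> u \<in> D \<and> (\<forall>x\<in>D. \<forall>y\<in>D. x\<noteq>y \<longrightarrow> E x y) \<and> k \<le> card D"
   and k: "k \<le> card C0"
   and C0cl: "\<forall>u\<in>C0. \<forall>v\<in>C0. u\<noteq>v \<longrightarrow> E u v"
   and loops: "\<forall>v\<in>P. E v v"
   and sym: "\<And>u v. E u v \<Longrightarrow> E v u"
  shows "card {v\<in>P. \<exists>w\<in>P. \<not>E v w} \<le> card (P-C0) * (card C0 - k + 2)"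
proof -
  define R where "R = P - C0"
  define c where "c = card C0 - k"
  define Z where "Z = (\<lambda>X. {v\<in>C0. \<exists>x\<in>X. \<not>E v x})"
  define Q where "Q = (\<lambda>M. {v\<in>C0. (\<exists>x\<in>R. \<not>E v x) \<and> (\<forall>x\<in>R. \<not>E v x \<longrightarrow> x \<in> M)})"
  have finC0: "finite C0" using fin C0P finite_subset by blast
  have finR: "finite R" using fin R_def by simp
  have hall: "card X \<le> card (Z X)" if XR: "X \<subseteq> R" and Xcl: "\<forall>x\<in>X. \<forall>y\<in>X. x\<noteq>y \<longrightarrow> E x y" for X
  proof -
    define C' where "C' = (C0 - Z X) \<union> X"
    have "C' \<subseteq> P" using XR C0P R_def C'_def by auto
    moreover have "\<forall>u\<in>C'. \<forall>v\<in>C'. u\<noteq>v \<longrightarrow> E u v"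
      unfolding C'_def Z_def using C0cl Xcl sym by blast
    ultimately have le: "card C' \<le> card C0" using maxc by blast
    have finX: "finite X" using XR finR finite_subset by blast
    have disj: "(C0 - Z X) \<inter> X = {}" using XR R_def by auto
    have "card C' = card (C0 - Z X) + card X"
      unfolding C'_def using disj finC0 finX card_Un_disjoint by (metis finite_Diff)
    moreover have "card (C0 - Z X) = card C0 - card (Z X)"
      using finC0 by (simp add: Z_def card_Diff_subset finite_subset)
    moreover have "card (Z X) \<le> card C0" using finC0 by (simp add: Z_def card_mono)
    ultimately show ?thesis using le by linarith
  qed
  have claim: "\<forall>M. M \<subseteq> R \<longrightarrow> card M = n \<longrightarrow> card (Q M) \<le> (c+1) * n" for n
  proof (induction n rule: less_induct)
    case (less n)
    show ?case
    proof (intro allI impI)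
      fix M assume MR: "M \<subseteq> R" and cM: "card M = n"
      have finM: "finite M" using MR finR finite_subset by blast
      show "card (Q M) \<le> (c+1) * n"
      proof (cases "M = {}")
        case True
        then have "Q M = {}" unfolding Q_def by auto
        then show ?thesis by simp
      next
        case False
        then obtain u where uM: "u \<in> M" by blast
        then have "u \<in> P - C0" using MR R_def by auto
        from cov[OF this] obtain D where DD: "D \<subseteq> P \<and> u \<in> D \<and> (\<forall>x\<in>D. \<forall>y\<in>D. x\<noteq>y \<longrightarrow> E x y) \<and> k \<le> card D" by (elim exE)
        then have DP: "D \<subseteq> P" and uD: "u \<in> D"
          and Dcl: "\<forall>x\<in>D. \<forall>y\<in>D. x\<noteq>y \<longrightarrow> E x y" and kD: "k \<le> card D" by simp_all
        define X where "X = R \<inter> D"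
        define Y where "Y = C0 - D"
        have finD: "finite D" using DP fin finite_subset by blast
        have finX: "finite X" using X_def finR by simp
        have "card D = card (C0 \<inter> D) + card X"
        proof -
          have "D = (C0 \<inter> D) \<union> X" using DP X_def R_def by auto
          moreover have "(C0 \<inter> D) \<inter> X = {}" using X_def R_def by auto
          ultimately show ?thesis using finD finX card_Un_disjoint
            by (metis finite_Int)
        qed
        moreover have "card Y = card C0 - card (C0 \<inter> D)"
          unfolding Y_def using finC0 by (metis Diff_Int card_Diff_subset_Int finite_Int inf.cobounded1 card_Diff_subset finite_subset)
        moreover have "card (C0 \<inter> D) \<le> card C0" using finC0 by (simp add: card_mono)
        ultimately have cY: "card Y \<le> c + card X" using kD c_def by linarith
        have ZXY: "Z X \<subseteq> Y" unfolding Z_def Y_def X_def R_def using Dcl by (auto; metis)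
        have ZXM: "Z (X - M) \<subseteq> Z X" unfolding Z_def by blast
        have h1: "card (X - M) \<le> card (Z (X - M))"
          using hall[of "X - M"] X_def Dcl by auto
        have sub1: "Q M \<inter> Z X \<subseteq> Y - Z (X - M)"
          using ZXY unfolding Q_def Z_def X_def by blast
        have finY: "finite Y" using Y_def finC0 by simp
        have "card (Q M \<inter> Z X) \<le> card (Y - Z (X - M))"
          using sub1 finY by (simp add: card_mono)
        also have "\<dots> = card Y - card (Z (X - M))"
          using ZXM ZXY finY by (meson card_Diff_subset finite_subset order_trans)
        finally have A: "card (Q M \<inter> Z X) \<le> c + card X - card (X - M)"
          using cY h1 by linarith
        have cXsplit: "card X = card (X \<inter> M) + card (X - M)"
          using finX by (metis Diff_Diff_Int card_Diff_subset_Int finite_Int inf.cobounded1 inf_commute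
              card_Int_Diff)
        have A2: "card (Q M \<inter> Z X) \<le> c + card (X \<inter> M)" using A cXsplit by linarith
        have sub2: "Q M - Z X \<subseteq> Q (M - X)"
          unfolding Q_def Z_def X_def R_def by blast
        have uXM: "u \<in> X \<inter> M" using uM uD MR X_def by auto
        have cMX: "card (M - X) = n - card (X \<inter> M)"
          using cM finM by (metis Int_commute card_Diff_subset_Int finite_Int)
        have j1: "card (X \<inter> M) \<ge> 1" using uXM finX
          by (metis One_nat_def Suc_leI card_gt_0_iff empty_iff finite_Int)
        have jn: "card (X \<inter> M) \<le> n" using cM finM by (metis card_mono inf.cobounded2)
        have lt: "n - card (X \<inter> M) < n" using j1 jn by linarith
        have MXR: "M - X \<subseteq> R" using MR by blast
        have IH: "card (Q (M - X)) \<le> (c+1) * (n - card (X \<inter> M))"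
          using spec[OF less.IH[OF lt], of "M - X"] MXR cMX by blast
        have finQ: "finite (Q M)" unfolding Q_def using finC0 by simp
        have "card (Q M) \<le> card (Q M - Z X) + card (Q M \<inter> Z X)"
          by (metis Diff_Int card_Un_le Un_Diff_Int le_refl card_Int_Diff finQ)
        also have "card (Q M - Z X) \<le> card (Q (M - X))"
          using sub2 by (simp add: card_mono Q_def finC0)
        finally have "card (Q M) \<le> (c+1) * (n - card (X \<inter> M)) + c + card (X \<inter> M)"
          using IH A2 by linarith
        also have "\<dots> \<le> (c+1) * n"
        proof -
          obtain j where j: "card (X \<inter> M) = Suc j" using j1 by (metis Suc_le_D One_nat_def)
          have m: "(c+1)*Suc j \<le> (c+1)*n" using jn j by (metis mult_le_mono2)
          have e: "(c+1)*(n - Suc j) = (c+1)*n - (c+1)*Suc j" by (simp add: diff_mult_distrib2)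
          have f: "(c+1)*Suc j = c + Suc j + c*j" by simp
          show ?thesis unfolding j using m e f by linarith
        qed
        finally show ?thesis .
      qed
    qed
  qed
  have QR: "card (Q R) \<le> (c+1) * card R" using claim by blast
  have bad: "{v\<in>P. \<exists>w\<in>P. \<not>E v w} \<subseteq> R \<union> Q R"
  proof
    fix v assume "v \<in> {v\<in>P. \<exists>w\<in>P. \<not>E v w}"
    then obtain w where vP: "v \<in> P" and wP: "w \<in> P" and nvw: "\<not> E v w" by blast
    show "v \<in> R \<union> Q R"
    proof (cases "v \<in> C0")
      case False then show ?thesis using vP R_def by blast
    next
      case True
      have "w \<notin> C0"
      proof
        assume "w \<in> C0"
        then show False using True C0cl loops vP nvw by (cases "v = w") auto
      qed
      then have "w \<in> R" using wP R_def by blast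
      then show ?thesis unfolding Q_def using True nvw by blast
    qed
  qed
  have "card {v\<in>P. \<exists>w\<in>P. \<not>E v w} \<le> card (R \<union> Q R)"
    using bad finR by (simp add: card_mono Q_def finC0)
  also have "\<dots> \<le> card R + card (Q R)" by (rule card_Un_le)
  finally show ?thesis using QR R_def c_def by (simp add: algebra_simps)
qed


lemma arith_bound:
  fixes a b T :: int
  assumes "0 \<le> a" "a \<le> b" "b \<le> T"
  shows "a*(b+2-a) \<le> b + 1 + T^2 div 4"
proof -
  have "0 \<le> (b+2-2*a)^2" by simp
  then have h: "4*(a*(b+2-a)) \<le> b^2 + (b+1)*4" by (simp add: power2_eq_square algebra_simps)
  have "(4*(a*(b+2-a))) div 4 \<le> (b^2 + (b+1)*4) div 4" using h by (rule zdiv_mono1) simp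
  also have "\<dots> = b^2 div 4 + (b+1)" by simp
  also have "b^2 div 4 \<le> T^2 div 4"
  proof (rule zdiv_mono1)
    show "b^2 \<le> T^2" using assms by (intro power_mono) auto
  qed simp
  finally show ?thesis by simp
qed


theorem mainTheorem6:
  fixes N T :: int and V :: "'a set" and E :: "'a \<Rightarrow> 'a \<Rightarrow> bool"
  assumes "0 \<le> T" and "T \<le> N"
    and "undirected_graph V E"
    and "N - T \<le> int (card V)" and "int (card V) \<le> N"
    and "\<forall>v\<in>V. E v v"
    and "clique_vertices V E (N - T) \<noteq> {}"
  shows "int (card {v \<in> clique_vertices V E (N - T).
                      \<forall>w\<in>clique_vertices V E (N - T). E v w}) \<ge> N - F_bound T"
proof -
  define P where "P = clique_vertices V E (N - T)"
  define k where "k = nat (N - T)"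
  have kk: "int k = N - T" using assms(2) k_def by simp
  have finV: "finite V" and inV: "\<And>u v. E u v \<Longrightarrow> u \<in> V \<and> v \<in> V"
    and sym: "\<And>u v. E u v \<Longrightarrow> E v u"
    using assms(3) unfolding undirected_graph_def by blast+
  have PV: "P \<subseteq> V" unfolding P_def clique_vertices_def by blast
  have finP: "finite P" using PV finV finite_subset by blast
  have clV: "\<And>C. is_clique V E C \<Longrightarrow> card C \<le> card V"
    using finV by (simp add: is_clique_def card_mono)
  have e0: "is_clique V E {}" by (simp add: is_clique_def)
  have bnd: "\<forall>y. is_clique V E y \<longrightarrow> card y < Suc (card V)" using clV by (simp add: less_Suc_eq_le)
  from ex_has_greatest_nat[OF e0 bnd] obtain C0 where C0c: "is_clique V E C0"
    and C0max: "\<forall>C. is_clique V E C \<longrightarrow> card C \<le> card C0" by blast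
  obtain v0 where "v0 \<in> P" using assms(7) P_def by blast
  then obtain C1 where C1: "is_clique V E C1" "int (card C1) \<ge> N - T"
    unfolding P_def clique_vertices_def by blast
  have "card C1 \<le> card C0" using C0max C1(1) by blast
  then have kC0: "k \<le> card C0" using C1(2) kk by linarith
  have C0P: "C0 \<subseteq> P"
  proof
    fix v assume vC: "v \<in> C0"
    have vV: "v \<in> V" using C0c vC unfolding is_clique_def by blast
    have cc: "int (card C0) \<ge> N - T" using kC0 kk by linarith
    have "\<exists>C. is_clique V E C \<and> v \<in> C \<and> int (card C) \<ge> N - T"
      using C0c vC cc by blast
    then show "v \<in> P" unfolding P_def clique_vertices_def using vV by simp
  qed
  have maxc: "card C \<le> card C0" if "C \<subseteq> P" "\<forall>u\<in>C. \<forall>v\<in>C. u\<noteq>v \<longrightarrow> E u v" for C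
  proof -
    have "C \<subseteq> V" using that(1) PV by (rule order_trans)
    then have "is_clique V E C" using that(2) unfolding is_clique_def by simp
    then show ?thesis using C0max by simp
  qed
  have cov: "\<exists>D. D \<subseteq> P \<and> u \<in> D \<and> (\<forall>x\<in>D. \<forall>y\<in>D. x\<noteq>y \<longrightarrow> E x y) \<and> k \<le> card D"
    if "u \<in> P - C0" for u
  proof -
    from that obtain D where D: "is_clique V E D" "u \<in> D" "int (card D) \<ge> N - T"
      unfolding P_def clique_vertices_def by blast
    have "D \<subseteq> P" using D unfolding P_def clique_vertices_def is_clique_def by blast
    moreover have "k \<le> card D" using D(3) kk by linarith
    ultimately show ?thesis using D unfolding is_clique_def by blast
  qed
  have C0cl: "\<forall>u\<in>C0. \<forall>v\<in>C0. u\<noteq>v \<longrightarrow> E u v" using C0c unfolding is_clique_def by simp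
  have loops: "\<forall>v\<in>P. E v v" using assms(6) PV by blast
  define bad where "bad = {v\<in>P. \<exists>w\<in>P. \<not>E v w}"
  have cb: "card bad \<le> card (P-C0) * (card C0 - k + 2)"
    unfolding bad_def using core[OF finP C0P maxc cov kC0 C0cl loops sym] by blast
  have eqs: "{v \<in> P. \<forall>w\<in>P. E v w} = P - bad" unfolding bad_def by blast
  have badP: "bad \<subseteq> P" unfolding bad_def by blast
  have cs: "card (P - bad) = card P - card bad" using badP finP by (simp add: card_Diff_subset finite_subset)
  have cbP: "card bad \<le> card P" using badP finP by (simp add: card_mono)
  have cP: "card P = card C0 + card (P - C0)" using C0P finP
    by (metis card_Diff_subset finite_subset le_add_diff_inverse card_mono)
  have cPV: "card P \<le> card V" using PV finV by (simp add: card_mono)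
  define a where "a = int (card (P - C0))"
  define b where "b = int (card P) - int k"
  have ab: "0 \<le> a" "a \<le> b" "b \<le> T" using cP kC0 cPV assms(5) kk by (auto simp: a_def b_def)
  have AB: "a*(b+2-a) \<le> b + 1 + T^2 div 4" using arith_bound[OF ab] .
  have "int (card bad) \<le> a * (b + 2 - a)"
  proof -
    have "int (card bad) \<le> int (card (P-C0) * (card C0 - k + 2))" using cb by linarith
    also have "\<dots> = a * (b + 2 - a)"
    proof -
      obtain d where d: "card C0 = k + d" using kC0 le_Suc_ex by blast
      then have "card C0 - k + 2 = d + 2" by simp
      moreover have "b = int d + a" using cP d by (simp add: a_def b_def)
      ultimately show ?thesis by (simp add: a_def algebra_simps)
    qed
    finally show ?thesis .
  qed
  then have "int (card (P - bad)) \<ge> N - F_bound T"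
    using cs cbP AB kk unfolding F_bound_def b_def by linarith
  then show ?thesis using eqs P_def by simp
qed

end
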